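(* Let $V=\mathbb{C}^2$, $e\ge1$, $d=2e$, $r\ge 2$, and let $0\le p\le\lfloor re/2\rfloor$. Let $\alpha_r:S_r(S_d(V))\to S_2(S_{re}(V))$ be the map defined below and let $\pi_p:S_2(S_{re}(V))\to S_{rd-4p}(V)$ be the $SL_2$-equivariant projection onto the (unique) irreducible summand isomorphic to $S_{rd-4p}(V)$ in the decomposition $S_2(S_{re}(V))=\bigoplus_{p=0}^{\lfloor re/2\rfloor}S_{rd-4p}(V)$. Then $\pi_p\circ\alpha_r\neq 0$.
   Context: $S_k(V)$ is identified with binary forms of degree $k$ in $\underline{x}=(x_0,x_1)$, and $S_2(S_m(V))$ with polynomials in $\underline{x},\underline{y}=(y_0,y_1)$ bihomogeneous of bidegree $(m,m)$ and symmetric under swapping $\underline{x},\underline{y}$. The map $\alpha_r$ is defined on products $F_1\cdots F_r$ of degree-$d$ binary forms by $\alpha_r(F_1\cdots F_r)=\prod_{i=1}^r\bigl((y_0\partial_{x_0}+y_1\partial_{x_1})^eF_i(\underline{x})\bigr)$, extended linearly. (Up to a nonzero constant, $\pi_p(G)$ equals $[\Omega^{2p}G]_{\underline{y}:=\underline{x}}$ with $\Omega=\frac{\partial^2}{\partial x_0\partial y_1}-\frac{\partial^2}{\partial x_1\partial y_0}$.) *)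

theory Defs
  imports Complex_Main "HOL-Library.Poly_Mapping"
begin

text \<open>Polynomials with complex coefficients in the variables
  x0 = var 0, x1 = var 1, y0 = var 2, y1 = var 3, represented as finitely
  supported maps from monomials (exponent vectors) to coefficients.\<close>

type_synonym cpoly = "(nat \<Rightarrow>\<^sub>0 nat) \<Rightarrow>\<^sub>0 complex"

definition var :: "nat \<Rightarrow> cpoly" where
  "var i = Poly_Mapping.single (Poly_Mapping.single i 1) 1"

definition pd :: "nat \<Rightarrow> cpoly \<Rightarrow> cpoly" where
  "pd i P = (\<Sum>m\<in>Poly_Mapping.keys P. Poly_Mapping.single (m - Poly_Mapping.single i 1)
                              (of_nat (Poly_Mapping.lookup m i) * Poly_Mapping.lookup P m))"

definition binary_form :: "nat \<Rightarrow> cpoly \<Rightarrow> bool" where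
  "binary_form k F \<longleftrightarrow>
     (\<forall>m\<in>Poly_Mapping.keys F. (\<forall>i. i \<noteq> 0 \<and> i \<noteq> 1 \<longrightarrow> Poly_Mapping.lookup m i = 0) \<and> Poly_Mapping.lookup m 0 + Poly_Mapping.lookup m 1 = k)"

definition polar :: "cpoly \<Rightarrow> cpoly" where
  "polar F = var 2 * pd 0 F + var 3 * pd 1 F"

definition Omega :: "cpoly \<Rightarrow> cpoly" where
  "Omega G = pd 0 (pd 3 G) - pd 1 (pd 2 G)"

definition subst_yx :: "cpoly \<Rightarrow> cpoly" where
  "subst_yx P = (\<Sum>m\<in>Poly_Mapping.keys P. Poly_Mapping.single
      (Poly_Mapping.single 0 (Poly_Mapping.lookup m 0 + Poly_Mapping.lookup m 2) + Poly_Mapping.single 1 (Poly_Mapping.lookup m 1 + Poly_Mapping.lookup m 3))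
      (Poly_Mapping.lookup P m))"

text \<open>alpha_r on a product F_1 ... F_r of degree-d forms (e-th polarization of each factor).\<close>
definition alpha :: "nat \<Rightarrow> nat \<Rightarrow> (nat \<Rightarrow> cpoly) \<Rightarrow> cpoly" where
  "alpha r e F = (\<Prod>i<r. (polar ^^ e) (F i))"

text \<open>The projection pi_p (up to a nonzero constant): [Omega^(2p) G]_{y:=x}.\<close>
definition proj :: "nat \<Rightarrow> cpoly \<Rightarrow> cpoly" where
  "proj p G = subst_yx ((Omega ^^ (2 * p)) G)"

end

theory Submission
  imports Defs
begin


abbreviation sg where "sg \<equiv> Poly_Mapping.single"
abbreviation lk where "lk \<equiv> Poly_Mapping.lookup"

lemma poly_sum_singles: "(\<Sum>m\<in>Poly_Mapping.keys P. sg m (lk P m)) = P"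
  by (rule poly_mapping_eqI)
     (auto simp: lookup_sum lookup_single when_def in_keys_iff sum.delta' split: if_splits)

lemma lookup_mult_fin:
  "lk (P * Q) k = (\<Sum>a\<in>Poly_Mapping.keys P. \<Sum>b\<in>Poly_Mapping.keys Q.
       if a + b = k then lk P a * lk Q b else (0::complex))"
proof -
  have "P * Q = (\<Sum>a\<in>Poly_Mapping.keys P. sg a (lk P a)) * (\<Sum>b\<in>Poly_Mapping.keys Q. sg b (lk Q b))"
    by (simp only: poly_sum_singles)
  also have "\<dots> = (\<Sum>a\<in>Poly_Mapping.keys P. \<Sum>b\<in>Poly_Mapping.keys Q. sg (a+b) (lk P a * lk Q b))"
    by (simp add: sum_product mult_single)
  finally show ?thesis
    by (simp add: lookup_sum lookup_single when_def)
qed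

lemma lk_minus_nat: "lk (m - n) i = lk m i - (lk n i :: nat)"
  by (rule lookup_minus)

lemma lookup_pd: "lk (pd i P) k = of_nat (lk k i + 1) * lk P (k + sg i 1)"
proof -
  have "lk (pd i P) k = (\<Sum>m\<in>Poly_Mapping.keys P.
          if m = k + sg i 1 then of_nat (lk k i + 1) * lk P m else 0)"
    unfolding pd_def lookup_sum
  proof (rule sum.cong[OF refl])
    fix m assume "m \<in> Poly_Mapping.keys P"
    show "lk (sg (m - sg i 1) (of_nat (lk m i) * lk P m)) k =
      (if m = k + sg i 1 then of_nat (lk k i + 1) * lk P m else 0)"
    proof (cases "lk m i = 0")
      case True
      then have "m \<noteq> k + sg i 1" by (auto simp: lookup_add)
      then show ?thesis using True by (simp add: lookup_single when_def)
    next
      case False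
      have "(m - sg i 1 = k) \<longleftrightarrow> (m = k + sg i 1)"
      proof
        assume "m - sg i 1 = k"
        then show "m = k + sg i 1"
          using False by (intro poly_mapping_eqI) (auto simp: lookup_add lk_minus_nat lookup_single when_def)
      next
        assume "m = k + sg i 1"
        then show "m - sg i 1 = k"
          by (intro poly_mapping_eqI) (auto simp: lookup_add lk_minus_nat lookup_single when_def)
      qed
      then show ?thesis
        by (auto simp: lookup_single when_def lookup_add)
    qed
  qed
  also have "\<dots> = of_nat (lk k i + 1) * lk P (k + sg i 1)"
    by (simp add: sum.delta' in_keys_iff)
  finally show ?thesis .
qed


lemma pd_add: "pd i (P + Q) = pd i P + pd i Q"
  by (rule poly_mapping_eqI) (simp add: lookup_pd lookup_add algebra_simps)

lemma pd_zero: "pd i 0 = 0"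
  by (rule poly_mapping_eqI) (simp add: lookup_pd)

lemma pd_sum: "pd i (sum f A) = (\<Sum>a\<in>A. pd i (f a))"
  by (rule poly_mapping_eqI) (simp add: lookup_pd lookup_sum sum_distrib_left)

lemma pd_single: "pd i (sg m c) = sg (m - sg i 1) (of_nat (lk m i) * c)"
proof (rule poly_mapping_eqI)
  fix k
  show "lk (pd i (sg m c)) k = lk (sg (m - sg i 1) (of_nat (lk m i) * c)) k"
  proof (cases "lk m i = 0")
    case True
    then have "m \<noteq> k + sg i 1" by (auto simp: lookup_add)
    then show ?thesis using True by (simp add: lookup_pd lookup_single when_def)
  next
    case False
    have "(m - sg i 1 = k) \<longleftrightarrow> (m = k + sg i 1)"
    proof
      assume "m - sg i 1 = k"
      then show "m = k + sg i 1"
        using False by (intro poly_mapping_eqI) (auto simp: lookup_add lk_minus_nat lookup_single when_def)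
    next
      assume "m = k + sg i 1"
      then show "m - sg i 1 = k"
        by (intro poly_mapping_eqI) (auto simp: lookup_add lk_minus_nat lookup_single when_def)
    qed
    then show ?thesis
      by (auto simp: lookup_pd lookup_single when_def lookup_add)
  qed
qed

lemma pd_mono_leibniz:
  "pd i (sg a c * sg b c') = pd i (sg a c) * sg b c' + sg a c * pd i (sg b c')"
proof -
  have e1: "b + (a - sg i (Suc 0)) = a + b - sg i (Suc 0)" if "lk a i > 0"
    using that by (intro poly_mapping_eqI) (auto simp: lookup_add lk_minus_nat lookup_single when_def)
  have e2: "a + (b - sg i (Suc 0)) = a + b - sg i (Suc 0)" if "lk b i > 0"
    using that by (intro poly_mapping_eqI) (auto simp: lookup_add lk_minus_nat lookup_single when_def)
  show ?thesis
    apply (simp add: mult_single pd_single lookup_add)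
    apply (cases "lk a i > 0"; cases "lk b i > 0")
       apply (simp_all add: e1 e2 algebra_simps flip: single_add)
    done
qed

lemma pd_leibniz: "pd i (P * Q) = pd i P * Q + P * pd i Q"
proof -
  let ?P = "\<lambda>a. sg a (lk P a)" and ?Q = "\<lambda>b. sg b (lk Q b)"
  have "pd i (P * Q) = pd i ((\<Sum>a\<in>Poly_Mapping.keys P. ?P a) * (\<Sum>b\<in>Poly_Mapping.keys Q. ?Q b))"
    by (simp only: poly_sum_singles)
  also have "\<dots> = (\<Sum>a\<in>Poly_Mapping.keys P. \<Sum>b\<in>Poly_Mapping.keys Q. pd i (?P a) * ?Q b + ?P a * pd i (?Q b))"
    by (simp add: sum_product pd_sum pd_mono_leibniz)
  also have "\<dots> = pd i (\<Sum>a\<in>Poly_Mapping.keys P. ?P a) * (\<Sum>b\<in>Poly_Mapping.keys Q. ?Q b)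
     + (\<Sum>a\<in>Poly_Mapping.keys P. ?P a) * pd i (\<Sum>b\<in>Poly_Mapping.keys Q. ?Q b)"
    by (simp add: sum.distrib sum_product pd_sum)
  finally show ?thesis by (simp only: poly_sum_singles)
qed


definition C :: "complex \<Rightarrow> cpoly" where "C c = sg 0 c"
definition L :: "complex \<Rightarrow> cpoly" where "L t = var 0 + C t * var 1"
definition M :: "complex \<Rightarrow> cpoly" where "M t = var 2 + C t * var 3"

lemma pd_var: "pd i (var j) = (if i = j then 1 else 0)"
  by (auto simp: var_def pd_single lookup_single when_def)

lemma pd_C: "pd i (C c) = 0"
  by (simp add: C_def pd_single)

lemma pd_of_nat: "pd i (of_nat n) = 0"
  using pd_C[of i "of_nat n"] by (simp add: C_def)

lemma pd_diff: "pd i (P - Q) = pd i P - pd i Q"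
  by (rule poly_mapping_eqI) (simp add: lookup_pd lookup_minus algebra_simps)

lemma polar_add: "polar (P + Q) = polar P + polar Q"
  by (simp add: polar_def pd_add algebra_simps)

lemma polar_mult: "polar (P * Q) = polar P * Q + P * polar Q"
  by (simp add: polar_def pd_leibniz algebra_simps)

lemma polar_L: "polar (L t) = M t"
  by (simp add: polar_def L_def M_def pd_add pd_leibniz pd_var pd_C algebra_simps)

lemma polar_M: "polar (M t) = 0"
  by (simp add: polar_def M_def pd_add pd_leibniz pd_var pd_C)

lemma polar_of_nat: "polar (of_nat n * P) = of_nat n * polar P"
  by (simp add: polar_def pd_leibniz pd_of_nat algebra_simps)

lemma polar_pow_L: "polar (L t ^ a) = of_nat a * L t ^ (a - 1) * M t"
proof (induction a)
  case 0 then show ?case by (simp add: polar_def pd_of_nat[of _ 1, simplified])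
next
  case (Suc a) then show ?case
    by (cases a) (simp_all add: polar_mult polar_L algebra_simps)
qed

lemma polar_pow_M: "polar (M t ^ b) = 0"
proof (induction b)
  case 0 then show ?case by (simp add: polar_def pd_of_nat[of _ 1, simplified])
next
  case (Suc b) then show ?case by (simp add: polar_mult polar_M)
qed

lemma polar_iter: "j \<le> d \<Longrightarrow>
   (polar ^^ j) (L t ^ d) = of_nat (\<Prod>i<j. d - i) * L t ^ (d - j) * M t ^ j"
proof (induction j)
  case 0 then show ?case by simp
next
  case (Suc j)
  then have "(polar ^^ Suc j) (L t ^ d) = polar (of_nat (\<Prod>i<j. d - i) * (L t ^ (d - j) * M t ^ j))"
    by (simp add: mult.assoc del: of_nat_prod)
  also have "\<dots> = of_nat (\<Prod>i<j. d - i) * (of_nat (d - j) * L t ^ (d - j - 1) * M t * M t ^ j)"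
    by (subst polar_of_nat) (simp add: polar_mult polar_pow_L polar_pow_M del: of_nat_prod)
  also have "\<dots> = of_nat (\<Prod>i<Suc j. d - i) * L t ^ (d - Suc j) * M t ^ Suc j"
    by (simp only: prod.lessThan_Suc of_nat_mult power_Suc diff_Suc_eq_diff_pred diff_commute[of d 1] mult_ac)
  finally show ?case .
qed


definition Omegap :: "cpoly \<Rightarrow> cpoly" where
  "Omegap G = pd 0 (pd 3 G) + pd 1 (pd 2 G)"

lemma lk_Omega: "lk (Omega X) m =
   of_nat (lk m 0 + 1) * of_nat (lk m 3 + 1) * lk X (m + sg 0 1 + sg 3 1)
 - of_nat (lk m 1 + 1) * of_nat (lk m 2 + 1) * lk X (m + sg 1 1 + sg 2 1)"
  by (simp add: Omega_def lookup_minus lookup_pd lookup_add lookup_single add.assoc add.commute[of "sg 3 1"] add.commute[of "sg 2 1"])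

lemma lk_Omegap: "lk (Omegap X) m =
   of_nat (lk m 0 + 1) * of_nat (lk m 3 + 1) * lk X (m + sg 0 1 + sg 3 1)
 + of_nat (lk m 1 + 1) * of_nat (lk m 2 + 1) * lk X (m + sg 1 1 + sg 2 1)"
  by (simp add: Omegap_def lookup_add lookup_pd lookup_single add.assoc add.commute[of "sg 3 1"] add.commute[of "sg 2 1"])

lemma omega_twist:
  assumes "\<forall>m. lk Q m = (-1) ^ (lk m 1) * lk P m"
  shows "lk ((Omega ^^ k) Q) m = (-1) ^ (lk m 1) * lk ((Omegap ^^ k) P) m"
proof (induction k arbitrary: m)
  case 0 then show ?case using assms by simp
next
  case (Suc k)
  have a: "lk (m + sg 0 1 + sg 3 1) 1 = lk m 1" "lk (m + sg 1 1 + sg 2 1) 1 = lk m 1 + 1"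
    by (simp_all add: lookup_add lookup_single)
  show ?case
    by (simp add: lk_Omega lk_Omegap Suc lookup_add lookup_single when_def algebra_simps)
qed

definition rnn :: "cpoly \<Rightarrow> bool" where "rnn P \<longleftrightarrow> (\<forall>m. 0 \<le> Re (lk P m))"

lemma rnn_Omegap: "rnn P \<Longrightarrow> rnn (Omegap P)"
  unfolding rnn_def lk_Omegap by (simp add: add_nonneg_nonneg)

lemma rnn_Omegap_iter: "rnn P \<Longrightarrow> rnn ((Omegap ^^ k) P)"
  by (induction k) (simp_all add: rnn_Omegap)

definition mon :: "nat \<Rightarrow> nat \<Rightarrow> nat \<Rightarrow> nat \<Rightarrow> (nat \<Rightarrow>\<^sub>0 nat)" where
  "mon a b c d = sg 0 a + sg 1 b + sg 2 c + sg 3 d"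

lemma mon_add: "mon a b c d + mon a' b' c' d' = mon (a+a') (b+b') (c+c') (d+d')"
  by (simp add: mon_def single_add ac_simps)

lemma Omegap_chain:
  assumes "rnn P"
  shows "j \<le> k \<Longrightarrow> 0 < Re (lk P (m + mon j (k - j) (k - j) j)) \<Longrightarrow> 0 < Re (lk ((Omegap ^^ k) P) m)"
proof (induction k arbitrary: m j)
  case 0 then show ?case by (simp add: mon_def)
next
  case (Suc k)
  let ?X = "(Omegap ^^ k) P"
  have nn: "rnn ?X" using assms rnn_Omegap_iter by blast
  show ?case
  proof (cases j)
    case 0
    have "m + mon j (Suc k - j) (Suc k - j) j = (m + sg 1 1 + sg 2 1) + mon 0 (k - 0) (k - 0) 0"
      using 0 by (intro poly_mapping_eqI) (simp add: mon_def lookup_add lookup_single when_def)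
    then have "0 < Re (lk ?X (m + sg 1 1 + sg 2 1))"
      using Suc.prems by (intro Suc.IH[of 0]) auto
    moreover have "0 \<le> Re (lk ?X (m + sg 0 1 + sg 3 1))" using nn by (simp add: rnn_def)
    ultimately show ?thesis
      by (simp add: lk_Omegap add_nonneg_pos mult_pos_pos)
  next
    case (Suc j')
    have "m + mon j (Suc k - j) (Suc k - j) j = (m + sg 0 1 + sg 3 1) + mon j' (k - j') (k - j') j'"
      using Suc by (intro poly_mapping_eqI) (simp add: mon_def lookup_add lookup_single when_def)
    then have "0 < Re (lk ?X (m + sg 0 1 + sg 3 1))"
      using Suc.prems Suc by (intro Suc.IH[of j']) auto
    moreover have "0 \<le> Re (lk ?X (m + sg 1 1 + sg 2 1))" using nn by (simp add: rnn_def)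
    ultimately show ?thesis
      by (simp add: lk_Omegap add_pos_nonneg mult_pos_pos)
  qed
qed


definition good :: "cpoly \<Rightarrow> bool" where
  "good P \<longleftrightarrow> (\<forall>m. Im (lk P m) = 0 \<and> 0 \<le> Re (lk P m))"

definition even1 :: "cpoly \<Rightarrow> bool" where
  "even1 P \<longleftrightarrow> (\<forall>m. odd (lk m 1) \<longrightarrow> lk P m = 0)"

lemma good_mult: "good P \<Longrightarrow> good Q \<Longrightarrow> good (P * Q)"
  unfolding good_def lookup_mult_fin
  by (auto simp: Re_sum Im_sum intro!: sum_nonneg sum.neutral)

lemma even1_mult: "even1 P \<Longrightarrow> even1 Q \<Longrightarrow> even1 (P * Q)"
  unfolding even1_def lookup_mult_fin
  by (auto intro!: sum.neutral simp: lookup_add)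

lemma good_add: "good P \<Longrightarrow> good Q \<Longrightarrow> good (P + Q)"
  unfolding good_def by (simp add: lookup_add)

lemma even1_add: "even1 P \<Longrightarrow> even1 Q \<Longrightarrow> even1 (P + Q)"
  unfolding even1_def by (simp add: lookup_add)

lemma good_single: "Im c = 0 \<Longrightarrow> 0 \<le> Re c \<Longrightarrow> good (sg k c)"
  unfolding good_def by (simp add: lookup_single when_def)

lemma even1_single: "even (lk k 1) \<Longrightarrow> even1 (sg k c)"
  unfolding even1_def by (simp add: lookup_single when_def)

lemma good_one: "good 1"
  using good_single[of 1 0] by simp

lemma even1_one: "even1 1"
  using even1_single[of 0 1] by simp

lemma good_pow: "good P \<Longrightarrow> good (P ^ n)"
  by (induction n) (simp_all add: good_one good_mult)

lemma even1_pow: "even1 P \<Longrightarrow> even1 (P ^ n)"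
  by (induction n) (simp_all add: even1_one even1_mult)

lemma good_of_nat: "good (of_nat n)"
  using good_single[of "of_nat n" 0] by simp

lemma even1_of_nat: "even1 (of_nat n)"
  using even1_single[of 0 "of_nat n"] by simp

lemma lb_mult:
  assumes "good P" "good Q" "1 \<le> Re (lk P a)" "1 \<le> Re (lk Q b)"
  shows "1 \<le> Re (lk (P * Q) (a + b))"
proof -
  let ?f = "\<lambda>x y. if x + y = a + b then lk P x * lk Q y else (0::complex)"
  have nn: "0 \<le> Re (?f x y)" for x y
    using assms(1,2) by (simp add: good_def)
  have aK: "a \<in> Poly_Mapping.keys P" and bK: "b \<in> Poly_Mapping.keys Q"
    using assms(3,4) by (auto simp: in_keys_iff)
  have "1 \<le> Re (lk P a) * Re (lk Q b)"
    using assms(3,4) by (metis mult_mono' mult_1 zero_le_one order_trans)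
  also have "\<dots> = Re (?f a b)"
    using assms(1,2) by (simp add: good_def)
  also have "\<dots> \<le> (\<Sum>y\<in>Poly_Mapping.keys Q. Re (?f a y))"
    using bK nn by (intro member_le_sum) auto
  also have "\<dots> \<le> (\<Sum>x\<in>Poly_Mapping.keys P. \<Sum>y\<in>Poly_Mapping.keys Q. Re (?f x y))"
    using aK nn by (intro member_le_sum[where f = "\<lambda>x. \<Sum>y\<in>Poly_Mapping.keys Q. Re (?f x y)"] sum_nonneg) auto
  also have "\<dots> = Re (lk (P * Q) (a + b))"
    by (simp add: lookup_mult_fin Re_sum)
  finally show ?thesis .
qed

definition X2 :: cpoly where "X2 = var 0 * var 0 + var 1 * var 1"
definition Y2 :: cpoly where "Y2 = var 2 * var 2 + var 3 * var 3"

lemma var_sq: "var j * var j = sg (sg j 2) 1"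
  by (simp add: var_def mult_single single_add[symmetric] numeral_2_eq_2)

lemma mon_simp: "mon a b c d = sg 0 a + sg 1 b + sg 2 c + sg 3 d"
  by (simp add: mon_def)

lemma lk_mon: "lk (mon a b c d) 0 = a" "lk (mon a b c d) 1 = b" "lk (mon a b c d) 2 = c" "lk (mon a b c d) 3 = d"
  by (simp_all add: mon_def lookup_add lookup_single when_def)

lemma mon_eq_iff: "m = mon a b c d \<longleftrightarrow> (\<forall>i. lk m i = lk (mon a b c d) i)"
  by (metis poly_mapping_eqI)

lemma good_X2: "good X2" and good_Y2: "good Y2"
  by (simp_all add: X2_def Y2_def var_sq good_add good_single)

lemma even1_sq: "even1 (var j * var j)"
  unfolding var_sq by (rule even1_single, simp only: lookup_single) (simp add: when_def)

lemma even1_X2: "even1 X2" and even1_Y2: "even1 Y2"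
  by (simp_all only: X2_def Y2_def even1_add even1_sq)

lemma good_var: "good (var j)"
  by (simp add: var_def good_single)

lemma even1_var: "j \<noteq> 1 \<Longrightarrow> even1 (var j)"
  by (simp add: var_def even1_single lookup_single when_def)


lemma mon_inj: "mon a b c d = mon a' b' c' d' \<longleftrightarrow> a = a' \<and> b = b' \<and> c = c' \<and> d = d'"
  by (metis lk_mon)

lemma mon_zero: "mon 0 0 0 0 = 0"
  by (simp add: mon_def)

lemma lb_mult_mon:
  assumes "good P" "good Q" "1 \<le> Re (lk P (mon a b c d))" "1 \<le> Re (lk Q (mon a' b' c' d'))"
    and "A = a + a'" "B = b + b'" "Cc = c + c'" "D = d + d'"
  shows "1 \<le> Re (lk (P * Q) (mon A B Cc D))"
  using lb_mult[OF assms(1-4)] assms(5-8) by (simp add: mon_add)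

lemma lb_pow:
  assumes "good P" "1 \<le> Re (lk P (mon a b c d))"
  shows "1 \<le> Re (lk (P ^ N) (mon (N*a) (N*b) (N*c) (N*d)))"
proof (induction N)
  case 0 then show ?case by (simp add: mon_zero)
next
  case (Suc N)
  show ?case unfolding power_Suc
    by (rule lb_mult_mon[OF assms(1) good_pow[OF assms(1)] assms(2) Suc]) simp_all
qed

lemma var_mon: "var 0 = sg (mon 1 0 0 0) 1" "var 1 = sg (mon 0 1 0 0) 1"
   "var 2 = sg (mon 0 0 1 0) 1" "var 3 = sg (mon 0 0 0 1) 1"
  by (simp_all add: var_def mon_def)

lemma X2_mon: "X2 = sg (mon 2 0 0 0) 1 + sg (mon 0 2 0 0) 1"
  unfolding X2_def var_mon mult_single mon_add by (simp add: numeral_2_eq_2)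

lemma Y2_mon: "Y2 = sg (mon 0 0 2 0) 1 + sg (mon 0 0 0 2) 1"
  unfolding Y2_def var_mon mult_single mon_add by (simp add: numeral_2_eq_2)

lemma lb_X2: "u \<le> N \<Longrightarrow> 1 \<le> Re (lk (X2 ^ N) (mon (2*N - 2*u) (2*u) 0 0))"
proof (induction N arbitrary: u)
  case 0 then show ?case by (simp add: mon_zero)
next
  case (Suc N)
  show ?case
  proof (cases "u \<le> N")
    case True
    show ?thesis unfolding power_Suc
      by (rule lb_mult_mon[where a=2 and b=0 and c=0 and d=0, OF good_X2 good_pow[OF good_X2] _ Suc.IH[OF True]])
         (use True in \<open>simp_all add: X2_mon lookup_add lookup_single when_def mon_inj\<close>)
  next
    case False
    then have u: "u = Suc N" using Suc.prems by simp
    show ?thesis unfolding power_Suc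
      by (rule lb_mult_mon[where a=0 and b=2 and c=0 and d=0, OF good_X2 good_pow[OF good_X2] _ Suc.IH[of N]])
         (use u in \<open>simp_all add: X2_mon lookup_add lookup_single when_def mon_inj\<close>)
  qed
qed

lemma lb_Y2: "u \<le> N \<Longrightarrow> 1 \<le> Re (lk (Y2 ^ N) (mon 0 0 (2*N - 2*u) (2*u)))"
proof (induction N arbitrary: u)
  case 0 then show ?case by (simp add: mon_zero)
next
  case (Suc N)
  show ?case
  proof (cases "u \<le> N")
    case True
    show ?thesis unfolding power_Suc
      by (rule lb_mult_mon[where a=0 and b=0 and c=2 and d=0, OF good_Y2 good_pow[OF good_Y2] _ Suc.IH[OF True]])
         (use True in \<open>simp_all add: Y2_mon lookup_add lookup_single when_def mon_inj\<close>)
  next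
    case False
    then have u: "u = Suc N" using Suc.prems by simp
    show ?thesis unfolding power_Suc
      by (rule lb_mult_mon[where a=0 and b=0 and c=0 and d=2, OF good_Y2 good_pow[OF good_Y2] _ Suc.IH[of N]])
         (use u in \<open>simp_all add: Y2_mon lookup_add lookup_single when_def mon_inj\<close>)
  qed
qed




lemma C_uminus: "C (- c) = - C c"
  by (simp add: C_def single_uminus)

lemma C_ii: "C \<i> * C \<i> = -1"
  by (simp add: C_def mult_single single_uminus)

lemma C_zero: "C 0 = 0"
  by (simp add: C_def)

lemma LL: "L \<i> * L (- \<i>) = X2"
proof -
  have "L \<i> * L (- \<i>) = var 0 * var 0 - (C \<i> * C \<i>) * (var 1 * var 1)"
    by (simp add: L_def C_uminus algebra_simps)
  then show ?thesis by (simp add: C_ii X2_def)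
qed

lemma MM: "M \<i> * M (- \<i>) = Y2"
proof -
  have "M \<i> * M (- \<i>) = var 2 * var 2 - (C \<i> * C \<i>) * (var 3 * var 3)"
    by (simp add: M_def C_uminus algebra_simps)
  then show ?thesis by (simp add: C_ii Y2_def)
qed

definition tt :: "nat \<Rightarrow> nat \<Rightarrow> complex" where
  "tt s i = (if i < s then \<i> else if i < 2 * s then - \<i> else 0)"

lemma alpha_eq:
  assumes "2 * s \<le> r"
  shows "alpha r e (\<lambda>i. L (tt s i) ^ (2 * e)) =
    of_nat ((\<Prod>i<e. 2 * e - i) ^ r) * X2 ^ (s * e) * Y2 ^ (s * e) * var 0 ^ ((r - 2 * s) * e) * var 2 ^ ((r - 2 * s) * e)"
proof -
  define c0 where "c0 = (\<Prod>i<e. 2 * e - i)"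
  define h where "h t = of_nat c0 * L t ^ e * M t ^ e" for t
  have hi: "(polar ^^ e) (L t ^ (2 * e)) = h t" for t
  proof -
    have "(polar ^^ e) (L t ^ (2 * e)) = of_nat c0 * L t ^ (2 * e - e) * M t ^ e"
      unfolding c0_def by (rule polar_iter) simp
    also have "2 * e - e = e" by simp
    finally show ?thesis by (simp only: h_def)
  qed
  have "alpha r e (\<lambda>i. L (tt s i) ^ (2 * e)) = (\<Prod>i<r. h (tt s i))"
    by (simp add: alpha_def hi)
  also have "\<dots> = (\<Prod>i\<in>{0..<s}. h (tt s i)) * (\<Prod>i\<in>{s..<2*s}. h (tt s i)) * (\<Prod>i\<in>{2*s..<r}. h (tt s i))"
    using assms by (simp add: atLeast0LessThan[symmetric] prod.atLeastLessThan_concat)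
  also have "\<dots> = (\<Prod>i\<in>{0..<s}. h \<i>) * (\<Prod>i\<in>{s..<2*s}. h (- \<i>)) * (\<Prod>i\<in>{2*s..<r}. h 0)"
    by (intro arg_cong2[where f = "(*)"] prod.cong) (auto simp: tt_def)
  also have "\<dots> = (h \<i> * h (- \<i>)) ^ s * h 0 ^ (r - 2 * s)"
    by (simp add: power_mult_distrib)
  also have "h \<i> * h (- \<i>) = of_nat (c0 * c0) * X2 ^ e * Y2 ^ e"
  proof -
    have "h \<i> * h (- \<i>) = of_nat c0 * of_nat c0 * (L \<i> ^ e * L (- \<i>) ^ e) * (M \<i> ^ e * M (- \<i>) ^ e)"
      unfolding h_def by (simp only: mult_ac)
    also have "\<dots> = of_nat (c0 * c0) * X2 ^ e * Y2 ^ e"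
      by (simp only: power_mult_distrib[symmetric] LL MM of_nat_mult)
    finally show ?thesis .
  qed
  also have "h 0 = of_nat c0 * var 0 ^ e * var 2 ^ e"
    by (simp add: h_def L_def M_def C_zero)
  finally have "alpha r e (\<lambda>i. L (tt s i) ^ (2 * e)) =
      (of_nat (c0 * c0) * X2 ^ e * Y2 ^ e) ^ s * (of_nat c0 * var 0 ^ e * var 2 ^ e) ^ (r - 2 * s)" .
  also have "\<dots> = (of_nat ((c0 * c0) ^ s * c0 ^ (r - 2 * s))) * (X2 ^ e) ^ s * (Y2 ^ e) ^ s
        * (var 0 ^ e) ^ (r - 2 * s) * (var 2 ^ e) ^ (r - 2 * s)"
    by (simp only: power_mult_distrib of_nat_mult of_nat_power mult_ac)
  also have "(c0 * c0) ^ s * c0 ^ (r - 2 * s) = c0 ^ r"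
    using assms by (simp add: power_mult_distrib flip: power_add mult_2)
  finally show ?thesis
    by (simp only: c0_def power_mult[symmetric] mult.commute[of e])
qed



lemma binary_form_mult: "binary_form a P \<Longrightarrow> binary_form b Q \<Longrightarrow> binary_form (a + b) (P * Q)"
  unfolding binary_form_def
  using keys_mult[of P Q] by (fastforce simp: lookup_add)

lemma binary_form_one: "binary_form 0 1"
  unfolding binary_form_def by (simp add: keys_one)

lemma binary_form_L: "binary_form 1 (L t)"
proof -
  have "L t = sg (sg 0 1) 1 + sg (sg 1 1) t"
    by (simp add: L_def C_def var_def mult_single)
  moreover have "Poly_Mapping.keys (sg (sg 0 1) 1 + sg (sg 1 1) (t::complex)) \<subseteq> {sg 0 1, sg 1 1}"
    using keys_add[of "sg (sg 0 1) 1" "sg (sg 1 1) t"] by (auto split: if_splits)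
  ultimately have ks: "Poly_Mapping.keys (L t) \<subseteq> {sg 0 1, sg 1 1}"
    by (simp only:)
  have "m = sg 0 1 \<or> m = sg 1 1" if "m \<in> Poly_Mapping.keys (L t)" for m
    using that ks by blast
  then show ?thesis
    unfolding binary_form_def
  proof (intro ballI)
    fix m assume "m \<in> Poly_Mapping.keys (L t)"
    then have "m = sg 0 1 \<or> m = sg 1 1" using ks by blast
    then show "(\<forall>i. i \<noteq> 0 \<and> i \<noteq> 1 \<longrightarrow> lk m i = 0) \<and> lk m 0 + lk m 1 = 1"
      by (elim disjE) (simp_all add: lookup_single when_def)
  qed
qed

lemma binary_form_pow: "binary_form n (L t ^ n)"
  by (induction n) (simp_all add: binary_form_one binary_form_mult[OF binary_form_L, simplified])


lemma lk_of_nat_zero: "lk (of_nat K :: cpoly) 0 = of_nat K"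
  by (metis lookup_single_eq single_of_nat)

theorem mainTheorem3:
  fixes e r p d :: nat
  assumes "e \<ge> 1" and "d = 2 * e" and "r \<ge> 2" and "p \<le> (r * e) div 2"
  shows "\<exists>F :: nat \<Rightarrow> cpoly. (\<forall>i<r. binary_form d (F i)) \<and> proj p (alpha r e F) \<noteq> 0"
proof -
  define s where "s = r div 2"
  define F where "F i = L (tt s i) ^ d" for i
  define N where "N = s * e"
  define A where "A = (r - 2 * s) * e"
  define n where "n = r * e"
  define k where "k = 2 * p"
  define c0 where "c0 = (\<Prod>i<e. 2 * e - i)"
  define G where "G = alpha r e F"
  have s2: "2 * s \<le> r" and s1: "1 \<le> s" using assms(3) by (auto simp: s_def)
  have nA: "n = 2 * N + A"
    using s2 by (simp add: n_def N_def A_def algebra_simps flip: add_mult_distrib)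
  have pN: "p \<le> 2 * N"
  proof -
    have "r \<le> 4 * s" using assms(3) by (simp add: s_def) 
    then have "r * e \<le> 4 * s * e" by simp
    then have "r * e div 2 \<le> (4 * s * e) div 2" by (rule div_le_mono)
    then show ?thesis using assms(4) by (simp add: N_def mult.commute)
  qed
  have kn: "k \<le> n" using assms(4) by (simp add: k_def n_def)
  define v where "v = min p N"
  define u where "u = p - v"
  have uN: "u \<le> N" and vN: "v \<le> N" using pN by (auto simp: u_def v_def)
  have Geq: "G = of_nat (c0 ^ r) * X2 ^ N * Y2 ^ N * var 0 ^ A * var 2 ^ A"
    unfolding G_def F_def assms(2) using alpha_eq[OF s2, of e]
    by (simp add: N_def A_def c0_def)
  have goodG: "good G"
    unfolding Geq by (intro good_mult good_pow good_of_nat good_X2 good_Y2 good_var)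
  have evG: "even1 G"
    unfolding Geq by (intro even1_mult even1_pow even1_of_nat even1_X2 even1_Y2 even1_var) simp_all
  have c0pos: "1 \<le> c0 ^ r"
  proof -
    have "0 < c0" unfolding c0_def by (intro prod_pos) auto
    then show ?thesis by simp
  qed
  have lbG: "1 \<le> Re (lk G (mon (2*N - 2*u + A) (2*u) (2*N - 2*v + A) (2*v)))"
  proof -
    have l0: "1 \<le> Re (lk (of_nat (c0 ^ r) :: cpoly) (mon 0 0 0 0))"
      unfolding mon_zero lk_of_nat_zero using c0pos by (simp del: of_nat_power add: of_nat_power[symmetric])
    have lx: "1 \<le> Re (lk (var 0 ^ A) (mon (A*1) (A*0) (A*0) (A*0)))"
      by (rule lb_pow) (simp_all add: var_mon good_single)
    have ly: "1 \<le> Re (lk (var 2 ^ A) (mon (A*0) (A*0) (A*1) (A*0)))"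
      by (rule lb_pow) (simp_all add: var_mon good_single)
    show ?thesis unfolding Geq
      apply (rule lb_mult_mon[OF _ _ _ ly])
      apply (intro good_mult good_pow good_of_nat good_X2 good_Y2 good_var)
      apply (intro good_mult good_pow good_of_nat good_X2 good_Y2 good_var)
      apply (rule lb_mult_mon[OF _ _ _ lx])
      apply (intro good_mult good_pow good_of_nat good_X2 good_Y2 good_var)
      apply (intro good_mult good_pow good_of_nat good_X2 good_Y2 good_var)
      apply (rule lb_mult_mon[OF _ _ _ lb_Y2[OF vN]])
      apply (intro good_mult good_pow good_of_nat good_X2 good_Y2 good_var)
      apply (intro good_mult good_pow good_of_nat good_X2 good_Y2 good_var)
      apply (rule lb_mult_mon[OF _ _ l0 lb_X2[OF uN]])
      apply (intro good_mult good_pow good_of_nat good_X2 good_Y2 good_var)+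
      apply simp_all
      done
  qed
  have twist: "lk ((Omega ^^ k) G) m = (-1) ^ (lk m 1) * lk ((Omegap ^^ k) G) m" for m
  proof (rule omega_twist, intro allI)
    fix m
    show "lk G m = (-1) ^ (lk m 1) * lk G m"
      using evG by (cases "even (lk m 1)") (auto simp: even1_def)
  qed
  have rnnG: "rnn G" using goodG by (simp add: rnn_def good_def)
  have rnnK: "rnn ((Omegap ^^ k) G)" by (rule rnn_Omegap_iter[OF rnnG])
  define mt where "mt = mon (n - k) 0 (n - k) 0"
  have posK: "0 < Re (lk ((Omegap ^^ k) G) mt)"
  proof (rule Omegap_chain[OF rnnG, of "2 * v"])
    show "2 * v \<le> k" by (simp add: k_def v_def)
    have "mt + mon (2 * v) (k - 2 * v) (k - 2 * v) (2 * v) = mon (2*N - 2*u + A) (2*u) (2*N - 2*v + A) (2*v)"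
      unfolding mt_def mon_add mon_inj using kn nA pN
      by (auto simp: k_def u_def v_def)
    then show "0 < Re (lk G (mt + mon (2 * v) (k - 2 * v) (k - 2 * v) (2 * v)))"
      using lbG by simp
  qed
  define key :: "(nat \<Rightarrow>\<^sub>0 nat) \<Rightarrow> (nat \<Rightarrow>\<^sub>0 nat)" where "key m = sg 0 (lk m 0 + lk m 2) + sg 1 (lk m 1 + lk m 3)" for m
  define Q where "Q = (Omega ^^ k) G"
  have projQ: "proj p G = (\<Sum>m\<in>Poly_Mapping.keys Q. sg (key m) (lk Q m))"
    by (simp add: proj_def subst_yx_def key_def Q_def k_def)
  have lkproj: "lk (proj p G) (key mt) = (\<Sum>m\<in>Poly_Mapping.keys Q. if key m = key mt then lk Q m else 0)"
    unfolding projQ lookup_sum by (simp add: lookup_single when_def)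
  have key1: "lk (key m) 1 = lk m 1 + lk m 3" for m
    by (simp add: key_def lookup_add lookup_single when_def)
  have terms: "0 \<le> Re (if key m = key mt then lk Q m else 0)" for m
  proof (cases "key m = key mt")
    case True
    have mt13: "lk mt 1 + lk mt 3 = 0" unfolding mt_def lk_mon by simp
    have "lk m 1 + lk m 3 = 0" using key1[of m] key1[of mt] True mt13 by metis
    then have "lk m 1 = 0" by simp
    then show ?thesis using True rnnK by (simp add: Q_def twist rnn_def)
  qed simp
  have lkmt1: "lk mt 1 = 0" unfolding mt_def lk_mon by simp
  have Qmt: "lk Q mt = lk ((Omegap ^^ k) G) mt"
    unfolding Q_def twist lkmt1 by simp
  then have mtK: "mt \<in> Poly_Mapping.keys Q" using posK by (auto simp: in_keys_iff)
  have "0 < Re (if key mt = key mt then lk Q mt else 0)" using posK Qmt by simp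
  also have "\<dots> \<le> (\<Sum>m\<in>Poly_Mapping.keys Q. Re (if key m = key mt then lk Q m else 0))"
    by (rule member_le_sum[OF mtK]) (use terms in auto)
  also have "\<dots> = Re (lk (proj p G) (key mt))"
    by (simp add: lkproj Re_sum)
  finally have "lk (proj p G) (key mt) \<noteq> 0" by auto
  then have "proj p G \<noteq> 0" by auto
  moreover have "\<forall>i<r. binary_form d (F i)"
    by (simp add: F_def binary_form_pow)
  ultimately show ?thesis unfolding G_def by blast
qed


end
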